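(* Let $\mathcal{M}=(M,\mathcal{C})$ be a transitive $\beta$-model of MK$^*$. Let $N_1,N_2\in\mathcal{C}$ and let $R_1,R_2\in\mathcal{C}$ be well-founded binary relations such that $(N_1,R_1)$ and $(N_2,R_2)$ are coding pairs. If there is an isomorphism between $(N_1,R_1)$ and $(N_2,R_2)$, then there is such an isomorphism in $\mathcal{C}$.
   Context: MK$^*$ is Morse–Kelley class theory (two-sorted models $(M,\mathcal{C})$, $M$ a transitive ZFC model, $\mathcal{C}\subseteq\mathcal{P}(M)$, with set axioms, class Foundation and Extensionality, Replacement for class functions, Class Comprehension for all two-sorted formulas, Global Choice) plus Class-Bounding $\forall x\,\exists A\,\varphi(x,A)\to\exists B\,\forall x\,\exists y\,\varphi(x,(B)_y)$ with $(B)_y=\{z:(y,z)\in B\}$. A $\beta$-model: a class is well-founded in the model iff truly well-founded. A coding pair is $(M_0,R)$ with $M_0\in\mathcal{C}$ having a distinguished element $a$ and $R\in\mathcal{C}$ a binary relation on $M_0$ such that: each $z\in M_0$ has a unique $R$-distance $n$ from $a$ (an $R$-chain $zRz_{n-1}R\cdots Rz_1Ra$); if $y\neq z$, $yRx$, $zRx$ then $(M_0,R)\restriction y\not\cong(M_0,R)\restriction z$ (restriction = the element with everything $R$-chain-connected below it); if $y\neq z$ have equal $R$-distance from $a$ then $vRy\to\neg vRz$; $R$ is well-founded. An isomorphism of coding pairs is an isomorphism of the structures $(N_1,R_1)\cong(N_2,R_2)$. *)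

theory Defs
  imports Main
begin

(* The ambient universe V is HOL itself.  The set part M of the two-sorted model is
   a HOL set M :: 'a set together with a membership relation E (E x y means "x is an
   element of y").  A transitive model corresponds (via Mostowski collapse) to a
   well-founded extensional membership relation; classes are real subsets of M. *)

datatype form =
    SMem nat nat
  | SEq nat nat
  | CMem nat nat
  | CEq nat nat
  | Neg form
  | Conj form form
  | SEx nat form
  | CEx nat form

fun first_order :: "form \<Rightarrow> bool" where
  "first_order (SMem i j) = True"
| "first_order (SEq i j) = True"
| "first_order (CMem i j) = False"
| "first_order (CEq i j) = False"
| "first_order (Neg p) = first_order p"
| "first_order (Conj p q) = (first_order p \<and> first_order q)"
| "first_order (SEx n p) = first_order p"
| "first_order (CEx n p) = False"

fun sat :: "'a set \<Rightarrow> ('a \<Rightarrow> 'a \<Rightarrow> bool) \<Rightarrow> 'a set set \<Rightarrow> (nat \<Rightarrow> 'a) \<Rightarrow> (nat \<Rightarrow> 'a set) \<Rightarrow> form \<Rightarrow> bool" where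
  "sat M E C s S (SMem i j) = E (s i) (s j)"
| "sat M E C s S (SEq i j) = (s i = s j)"
| "sat M E C s S (CMem i j) = (s i \<in> S j)"
| "sat M E C s S (CEq i j) = (S i = S j)"
| "sat M E C s S (Neg p) = (\<not> sat M E C s S p)"
| "sat M E C s S (Conj p q) = (sat M E C s S p \<and> sat M E C s S q)"
| "sat M E C s S (SEx n p) = (\<exists>a\<in>M. sat M E C (s(n := a)) S p)"
| "sat M E C s S (CEx n p) = (\<exists>A\<in>C. sat M E C s (S(n := A)) p)"

(* Kuratowski ordered pair p = {{x},{x,y}} computed inside the model *)
definition opair :: "'a set \<Rightarrow> ('a \<Rightarrow> 'a \<Rightarrow> bool) \<Rightarrow> 'a \<Rightarrow> 'a \<Rightarrow> 'a \<Rightarrow> bool" where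
  "opair M E x y p \<longleftrightarrow> x \<in> M \<and> y \<in> M \<and> p \<in> M \<and>
     (\<forall>q\<in>M. E q p \<longleftrightarrow> ((\<forall>w\<in>M. E w q \<longleftrightarrow> w = x) \<or> (\<forall>w\<in>M. E w q \<longleftrightarrow> w = x \<or> w = y)))"

definition rel_of :: "'a set \<Rightarrow> ('a \<Rightarrow> 'a \<Rightarrow> bool) \<Rightarrow> 'a set \<Rightarrow> ('a \<times> 'a) set" where
  "rel_of M E R = {(x, y). x \<in> M \<and> y \<in> M \<and> (\<exists>p\<in>R. opair M E x y p)}"

definition slice :: "'a set \<Rightarrow> ('a \<Rightarrow> 'a \<Rightarrow> bool) \<Rightarrow> 'a set \<Rightarrow> 'a \<Rightarrow> 'a set" where
  "slice M E B y = {z \<in> M. \<exists>p\<in>B. opair M E y z p}"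

definition pair_class :: "'a set \<Rightarrow> ('a \<Rightarrow> 'a \<Rightarrow> bool) \<Rightarrow> 'a set \<Rightarrow> bool" where
  "pair_class M E F \<longleftrightarrow> (\<forall>p\<in>F. \<exists>x\<in>M. \<exists>y\<in>M. opair M E x y p)"

definition functional_class :: "'a set \<Rightarrow> ('a \<Rightarrow> 'a \<Rightarrow> bool) \<Rightarrow> 'a set \<Rightarrow> bool" where
  "functional_class M E F \<longleftrightarrow> pair_class M E F \<and>
     (\<forall>x y y' p p'. opair M E x y p \<and> p \<in> F \<and> opair M E x y' p' \<and> p' \<in> F \<longrightarrow> y = y')"

(* M is (isomorphic to) a transitive set: membership is truly well-founded
   (extensionality is part of the ZFC axioms below) *)
definition transitive_model :: "'a set \<Rightarrow> ('a \<Rightarrow> 'a \<Rightarrow> bool) \<Rightarrow> bool" where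
  "transitive_model M E \<longleftrightarrow> wf {(x, y). x \<in> M \<and> y \<in> M \<and> E x y}"

definition zfc_model :: "'a set \<Rightarrow> ('a \<Rightarrow> 'a \<Rightarrow> bool) \<Rightarrow> bool" where
  "zfc_model M E \<longleftrightarrow>
    \<comment> \<open>Extensionality\<close>
    (\<forall>x\<in>M. \<forall>y\<in>M. (\<forall>z\<in>M. E z x \<longleftrightarrow> E z y) \<longrightarrow> x = y) \<and>
    \<comment> \<open>Foundation\<close>
    (\<forall>x\<in>M. (\<exists>y\<in>M. E y x) \<longrightarrow> (\<exists>y\<in>M. E y x \<and> \<not> (\<exists>z\<in>M. E z y \<and> E z x))) \<and>
    \<comment> \<open>Pairing\<close>
    (\<forall>a\<in>M. \<forall>b\<in>M. \<exists>c\<in>M. E a c \<and> E b c) \<and>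
    \<comment> \<open>Union\<close>
    (\<forall>x\<in>M. \<exists>u\<in>M. \<forall>y\<in>M. E y x \<longrightarrow> (\<forall>z\<in>M. E z y \<longrightarrow> E z u)) \<and>
    \<comment> \<open>Power set\<close>
    (\<forall>x\<in>M. \<exists>p\<in>M. \<forall>y\<in>M. (\<forall>z\<in>M. E z y \<longrightarrow> E z x) \<longrightarrow> E y p) \<and>
    \<comment> \<open>Infinity\<close>
    (\<exists>i\<in>M. (\<exists>e\<in>M. E e i \<and> (\<forall>z\<in>M. \<not> E z e)) \<and>
       (\<forall>y\<in>M. E y i \<longrightarrow> (\<exists>t\<in>M. E t i \<and> (\<forall>z\<in>M. E z t \<longleftrightarrow> E z y \<or> z = y)))) \<and>
    \<comment> \<open>Separation scheme (first-order formulas, parameters from M)\<close>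
    (\<forall>\<phi> n s. first_order \<phi> \<longrightarrow> range s \<subseteq> M \<longrightarrow>
       (\<forall>a\<in>M. \<exists>b\<in>M. \<forall>z\<in>M. E z b \<longleftrightarrow> E z a \<and> sat M E {} (s(n := z)) (\<lambda>_. {}) \<phi>)) \<and>
    \<comment> \<open>Replacement scheme\<close>
    (\<forall>\<phi> n m s. first_order \<phi> \<longrightarrow> n \<noteq> m \<longrightarrow> range s \<subseteq> M \<longrightarrow>
       (\<forall>a\<in>M. (\<forall>x\<in>M. E x a \<longrightarrow> (\<exists>!y. y \<in> M \<and> sat M E {} (s(n := x, m := y)) (\<lambda>_. {}) \<phi>)) \<longrightarrow>
          (\<exists>b\<in>M. \<forall>y\<in>M. E y b \<longleftrightarrow> (\<exists>x\<in>M. E x a \<and> sat M E {} (s(n := x, m := y)) (\<lambda>_. {}) \<phi>)))) \<and>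
    \<comment> \<open>Choice (for families of pairwise disjoint nonempty sets)\<close>
    (\<forall>x\<in>M. (\<forall>y\<in>M. E y x \<longrightarrow> (\<exists>z\<in>M. E z y)) \<and>
       (\<forall>y\<in>M. \<forall>y'\<in>M. E y x \<and> E y' x \<and> y \<noteq> y' \<longrightarrow> \<not> (\<exists>z\<in>M. E z y \<and> E z y')) \<longrightarrow>
       (\<exists>c\<in>M. \<forall>y\<in>M. E y x \<longrightarrow> (\<exists>!z. z \<in> M \<and> E z y \<and> E z c)))"

(* (M, C) is a model of MK* (class Extensionality holds automatically since classes
   are genuine subsets of M) *)
definition mk_star :: "'a set \<Rightarrow> ('a \<Rightarrow> 'a \<Rightarrow> bool) \<Rightarrow> 'a set set \<Rightarrow> bool" where
  "mk_star M E C \<longleftrightarrow>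
    C \<subseteq> Pow M \<and>
    zfc_model M E \<and>
    \<comment> \<open>Class Foundation\<close>
    (\<forall>X\<in>C. X \<noteq> {} \<longrightarrow> (\<exists>y\<in>X. \<forall>z\<in>M. E z y \<longrightarrow> z \<notin> X)) \<and>
    \<comment> \<open>Replacement for class functions\<close>
    (\<forall>F\<in>C. functional_class M E F \<longrightarrow>
       (\<forall>a\<in>M. \<exists>b\<in>M. \<forall>y\<in>M. E y b \<longleftrightarrow> (\<exists>x\<in>M. E x a \<and> (\<exists>p\<in>F. opair M E x y p)))) \<and>
    \<comment> \<open>Class Comprehension for all two-sorted formulas (with set and class parameters)\<close>
    (\<forall>\<phi> n s S. range s \<subseteq> M \<longrightarrow> range S \<subseteq> C \<longrightarrow>
       {z \<in> M. sat M E C (s(n := z)) S \<phi>} \<in> C) \<and>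
    \<comment> \<open>Global Choice\<close>
    (\<exists>G\<in>C. functional_class M E G \<and>
       (\<forall>x\<in>M. (\<exists>y\<in>M. E y x) \<longrightarrow> (\<exists>y\<in>M. \<exists>p\<in>G. opair M E x y p \<and> E y x))) \<and>
    \<comment> \<open>Class-Bounding\<close>
    (\<forall>\<phi> n k s S. range s \<subseteq> M \<longrightarrow> range S \<subseteq> C \<longrightarrow>
       (\<forall>x\<in>M. \<exists>A\<in>C. sat M E C (s(n := x)) (S(k := A)) \<phi>) \<longrightarrow>
       (\<exists>B\<in>C. \<forall>x\<in>M. \<exists>y\<in>M. sat M E C (s(n := x)) (S(k := slice M E B y)) \<phi>))"

definition model_wf :: "'a set \<Rightarrow> ('a \<Rightarrow> 'a \<Rightarrow> bool) \<Rightarrow> 'a set set \<Rightarrow> 'a set \<Rightarrow> bool" where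
  "model_wf M E C R \<longleftrightarrow> (\<forall>X\<in>C. X \<noteq> {} \<longrightarrow> (\<exists>y\<in>X. \<forall>x\<in>X. (x, y) \<notin> rel_of M E R))"

definition beta_model :: "'a set \<Rightarrow> ('a \<Rightarrow> 'a \<Rightarrow> bool) \<Rightarrow> 'a set set \<Rightarrow> bool" where
  "beta_model M E C \<longleftrightarrow> (\<forall>R\<in>C. model_wf M E C R \<longleftrightarrow> wf (rel_of M E R))"

definition struct_iso :: "('a \<Rightarrow> 'a) \<Rightarrow> 'a set \<Rightarrow> ('a \<times> 'a) set \<Rightarrow> 'a set \<Rightarrow> ('a \<times> 'a) set \<Rightarrow> bool" where
  "struct_iso f A r B s \<longleftrightarrow> bij_betw f A B \<and> (\<forall>x\<in>A. \<forall>y\<in>A. (x, y) \<in> r \<longleftrightarrow> (f x, f y) \<in> s)"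

definition codes :: "'a set \<Rightarrow> ('a \<Rightarrow> 'a \<Rightarrow> bool) \<Rightarrow> 'a set \<Rightarrow> ('a \<Rightarrow> 'a) \<Rightarrow> 'a set \<Rightarrow> bool" where
  "codes M E F f A \<longleftrightarrow> F \<subseteq> M \<and> (\<forall>p\<in>M. p \<in> F \<longleftrightarrow> (\<exists>x\<in>A. opair M E x (f x) p))"

definition class_iso :: "'a set \<Rightarrow> ('a \<Rightarrow> 'a \<Rightarrow> bool) \<Rightarrow> 'a set set \<Rightarrow> 'a set \<Rightarrow> ('a \<times> 'a) set \<Rightarrow> 'a set \<Rightarrow> ('a \<times> 'a) set \<Rightarrow> bool" where
  "class_iso M E C A r B s \<longleftrightarrow> (\<exists>F\<in>C. \<exists>f. struct_iso f A r B s \<and> codes M E F f A)"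

definition restr :: "'a set \<Rightarrow> ('a \<times> 'a) set \<Rightarrow> 'a \<Rightarrow> 'a set" where
  "restr N r y = {x \<in> N. (x, y) \<in> r\<^sup>*}"

definition coding_pair :: "'a set \<Rightarrow> ('a \<Rightarrow> 'a \<Rightarrow> bool) \<Rightarrow> 'a set set \<Rightarrow> 'a set \<Rightarrow> 'a set \<Rightarrow> bool" where
  "coding_pair M E C N R \<longleftrightarrow>
    (let r = rel_of M E R in
     N \<in> C \<and> R \<in> C \<and>
     (\<forall>p\<in>R. \<exists>x\<in>N. \<exists>y\<in>N. opair M E x y p) \<and>
     (\<exists>a\<in>N.
        (\<forall>z\<in>N. \<exists>!n. (z, a) \<in> r ^^ n) \<and>
        (\<forall>x\<in>N. \<forall>y\<in>N. \<forall>z\<in>N. y \<noteq> z \<and> (y, x) \<in> r \<and> (z, x) \<in> r \<longrightarrow>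
            \<not> class_iso M E C (restr N r y) r (restr N r z) r) \<and>
        (\<forall>y\<in>N. \<forall>z\<in>N. y \<noteq> z \<and> (\<exists>n. (y, a) \<in> r ^^ n \<and> (z, a) \<in> r ^^ n) \<longrightarrow>
            (\<forall>v. (v, y) \<in> r \<longrightarrow> (v, z) \<notin> r)) \<and>
        model_wf M E C R))"

end

theory Submission
  imports Defs
begin


definition Or :: "form \<Rightarrow> form \<Rightarrow> form" where "Or p q = Neg (Conj (Neg p) (Neg q))"
definition Imp :: "form \<Rightarrow> form \<Rightarrow> form" where "Imp p q = Neg (Conj p (Neg q))"
definition Iff :: "form \<Rightarrow> form \<Rightarrow> form" where "Iff p q = Conj (Imp p q) (Imp q p)"
definition SAll :: "nat \<Rightarrow> form \<Rightarrow> form" where "SAll n p = Neg (SEx n (Neg p))"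

lemma sat_derived[simp]:
  "sat M E C s S (Or p q) = (sat M E C s S p \<or> sat M E C s S q)"
  "sat M E C s S (Imp p q) = (sat M E C s S p \<longrightarrow> sat M E C s S q)"
  "sat M E C s S (Iff p q) = (sat M E C s S p \<longleftrightarrow> sat M E C s S q)"
  "sat M E C s S (SAll n p) = (\<forall>a\<in>M. sat M E C (s(n:=a)) S p)"
  by (auto simp: Or_def Imp_def Iff_def SAll_def)

definition opairF :: "nat \<Rightarrow> nat \<Rightarrow> nat \<Rightarrow> form" where
 "opairF i j k = SAll 20 (Iff (SMem 20 k) (Or (SAll 21 (Iff (SMem 21 20) (SEq 21 i)))
     (SAll 21 (Iff (SMem 21 20) (Or (SEq 21 i) (SEq 21 j))))))"

lemma sat_opairF[simp]:
  assumes "i < 20" "j < 20" "k < 20" "s i \<in> M" "s j \<in> M" "s k \<in> M"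
  shows "sat M E C s S (opairF i j k) = opair M E (s i) (s j) (s k)"
  using assms by (auto simp: opairF_def opair_def)

definition relH :: "'a set \<Rightarrow> ('a \<Rightarrow> 'a \<Rightarrow> bool) \<Rightarrow> 'a set \<Rightarrow> 'a \<Rightarrow> 'a \<Rightarrow> bool" where
  "relH M E R t t' = (\<exists>q\<in>M. q \<in> R \<and> opair M E t t' q)"

definition relF :: "nat \<Rightarrow> nat \<Rightarrow> nat \<Rightarrow> form" where
  "relF R i j = SEx 19 (Conj (CMem 19 R) (opairF i j 19))"

lemma sat_relF[simp]:
  assumes "i < 19" "j < 19" "s i \<in> M" "s j \<in> M"
  shows "sat M E C s S (relF R i j) = relH M E (S R) (s i) (s j)"
  using assms by (simp add: relF_def relH_def)



locale mk = fixes M :: "'a set" and E and C assumes mks: "mk_star M E C"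
begin

lemma zfc: "zfc_model M E" using mks by (simp add: mk_star_def)
lemma CM: "X \<in> C \<Longrightarrow> X \<subseteq> M" using mks by (auto simp: mk_star_def)

lemmas zfc_parts = zfc[unfolded zfc_model_def]
lemma ext: "x \<in> M \<Longrightarrow> y \<in> M \<Longrightarrow> (\<And>z. z \<in> M \<Longrightarrow> E z x \<longleftrightarrow> E z y) \<Longrightarrow> x = y"
  using zfc_parts[THEN conjunct1] by blast
lemma pairing: "a \<in> M \<Longrightarrow> b \<in> M \<Longrightarrow> \<exists>c\<in>M. E a c \<and> E b c"
  using zfc_parts[THEN conjunct2, THEN conjunct2, THEN conjunct1] by blast
lemma sep: "first_order \<phi> \<Longrightarrow> range s \<subseteq> M \<Longrightarrow>
       (\<forall>a\<in>M. \<exists>b\<in>M. \<forall>z\<in>M. E z b \<longleftrightarrow> E z a \<and> sat M E {} (s(n := z)) (\<lambda>_. {}) \<phi>)"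
  using zfc_parts[THEN conjunct2, THEN conjunct2, THEN conjunct2, THEN conjunct2, THEN conjunct2, THEN conjunct2, THEN conjunct1] by blast

lemma dbl: assumes "x \<in> M" "y \<in> M" shows "\<exists>d\<in>M. \<forall>z\<in>M. E z d \<longleftrightarrow> z = x \<or> z = y"
proof -
  obtain c where c: "c \<in> M" "E x c" "E y c" using pairing assms by blast
  have "range ((\<lambda>_. x)(2:=y)) \<subseteq> M" using assms by auto
  from sep[OF _ this, of "Or (SEq 0 1) (SEq 0 2)" 0] c(1)
  obtain b where "b \<in> M" "\<forall>z\<in>M. E z b \<longleftrightarrow> E z c \<and> (z = x \<or> z = y)"
    by (auto simp: Or_def)
  then show ?thesis using c by blast
qed

lemma opair_ex: assumes "x \<in> M" "y \<in> M" shows "\<exists>p. opair M E x y p"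
proof -
  obtain sx where sx: "sx \<in> M" "\<forall>z\<in>M. E z sx \<longleftrightarrow> z = x" using dbl[OF assms(1) assms(1)] by auto
  obtain dx where dx: "dx \<in> M" "\<forall>z\<in>M. E z dx \<longleftrightarrow> z = x \<or> z = y" using dbl[OF assms] by auto
  obtain p where p: "p \<in> M" "\<forall>z\<in>M. E z p \<longleftrightarrow> z = sx \<or> z = dx" using dbl[OF sx(1) dx(1)] by auto
  have "\<forall>q\<in>M. E q p \<longleftrightarrow> ((\<forall>w\<in>M. E w q \<longleftrightarrow> w = x) \<or> (\<forall>w\<in>M. E w q \<longleftrightarrow> w = x \<or> w = y))"
  proof
    fix q assume q: "q \<in> M"
    have 1: "q = sx \<longleftrightarrow> (\<forall>w\<in>M. E w q \<longleftrightarrow> w = x)"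
      using ext[OF q sx(1)] sx by auto
    have 2: "q = dx \<longleftrightarrow> (\<forall>w\<in>M. E w q \<longleftrightarrow> w = x \<or> w = y)"
      using ext[OF q dx(1)] dx by auto
    show "E q p \<longleftrightarrow> ((\<forall>w\<in>M. E w q \<longleftrightarrow> w = x) \<or> (\<forall>w\<in>M. E w q \<longleftrightarrow> w = x \<or> w = y))"
      using p(2)[rule_format, OF q] unfolding 1 2 .
  qed
  then show ?thesis using assms p(1) unfolding opair_def by blast
qed

lemma opair_uniq: assumes "opair M E x y p" "opair M E x y p'" shows "p = p'"
proof (rule ext)
  show "p \<in> M" "p' \<in> M" using assms by (auto simp: opair_def)
  fix z assume "z \<in> M" then show "E z p \<longleftrightarrow> E z p'" using assms unfolding opair_def by simp
qed

lemma opair_inj: assumes "opair M E x y p" "opair M E x' y' p" shows "x = x' \<and> y = y'"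
proof -
  have M: "x \<in> M" "y \<in> M" "x' \<in> M" "y' \<in> M" "p \<in> M" using assms by (auto simp: opair_def)
  obtain sx where sx: "sx \<in> M" "\<forall>z\<in>M. E z sx \<longleftrightarrow> z = x" using dbl[OF M(1) M(1)] by auto
  obtain dx where dx: "dx \<in> M" "\<forall>z\<in>M. E z dx \<longleftrightarrow> z = x \<or> z = y" using dbl[OF M(1,2)] by auto
  obtain dx' where dx': "dx' \<in> M" "\<forall>z\<in>M. E z dx' \<longleftrightarrow> z = x' \<or> z = y'" using dbl[OF M(3,4)] by auto
  have P1: "\<forall>q\<in>M. E q p \<longleftrightarrow> ((\<forall>w\<in>M. E w q \<longleftrightarrow> w = x) \<or> (\<forall>w\<in>M. E w q \<longleftrightarrow> w = x \<or> w = y))"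
    and P2: "\<forall>q\<in>M. E q p \<longleftrightarrow> ((\<forall>w\<in>M. E w q \<longleftrightarrow> w = x') \<or> (\<forall>w\<in>M. E w q \<longleftrightarrow> w = x' \<or> w = y'))"
    using assms by (auto simp: opair_def)
  have "E sx p" using P1 sx by simp
  then have "(\<forall>w\<in>M. E w sx \<longleftrightarrow> w = x') \<or> (\<forall>w\<in>M. E w sx \<longleftrightarrow> w = x' \<or> w = y')" using P2 sx(1) by blast
  then have "E x' sx" using M by blast
  then have xx: "x = x'" using sx M by auto
  have "E dx p" using P1 dx by simp
  then have c: "(\<forall>w\<in>M. E w dx \<longleftrightarrow> w = x') \<or> (\<forall>w\<in>M. E w dx \<longleftrightarrow> w = x' \<or> w = y')" using P2 dx by blast
  have "E dx' p" using P2 dx' by simp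
  then have c': "(\<forall>w\<in>M. E w dx' \<longleftrightarrow> w = x) \<or> (\<forall>w\<in>M. E w dx' \<longleftrightarrow> w = x \<or> w = y)" using P1 dx' by blast
  have "y = y'"
  proof (cases "\<forall>w\<in>M. E w dx \<longleftrightarrow> w = x'")
    case True
    then have yx: "y = x" using dx M xx by auto
    show ?thesis
    proof (cases "\<forall>w\<in>M. E w dx' \<longleftrightarrow> w = x")
      case True then show ?thesis using dx' M yx xx by auto
    next
      case False then have "\<forall>w\<in>M. E w dx' \<longleftrightarrow> w = x \<or> w = y" using c' by blast
      then show ?thesis using dx' M yx xx by auto
    qed
  next
    case False then have d: "\<forall>w\<in>M. E w dx \<longleftrightarrow> w = x' \<or> w = y'" using c by blast
    then have "y = x' \<or> y = y'" using dx M by auto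
    moreover have "y' = x \<or> y' = y" using d dx M by auto
    ultimately show ?thesis using xx by auto
  qed
  with xx show ?thesis by simp
qed

end


lemma restr_sub: "restr N r u \<subseteq> N" by (auto simp: restr_def)

lemma restr_down:
  assumes "r \<subseteq> N \<times> N" "(q, t) \<in> r" "t \<in> restr N r u"
  shows "q \<in> restr N r u"
  using assms by (auto simp: restr_def intro: converse_rtrancl_into_rtrancl)

lemma restr_self: "u \<in> N \<Longrightarrow> u \<in> restr N r u" by (auto simp: restr_def)

lemma restr_mono:
  assumes "(u, x) \<in> r\<^sup>*" shows "restr N r u \<subseteq> restr N r x"
  using assms by (auto simp: restr_def)

locale tree = fixes N :: "'a set" and r and a
  assumes rN: "r \<subseteq> N \<times> N" and aN: "a \<in> N" and dist: "\<forall>z\<in>N. \<exists>!n. (z, a) \<in> r ^^ n"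
    and wfr: "wf r"
begin

lemma restr_top: "restr N r a = N"
proof
  show "N \<subseteq> restr N r a"
  proof
    fix z assume "z \<in> N"
    then obtain n where "(z, a) \<in> r ^^ n" using ex1_implies_ex[OF dist[rule_format]] by blast
    then have "(z, a) \<in> r\<^sup>*" by (meson relpow_imp_rtrancl)
    then show "z \<in> restr N r a" using \<open>z \<in> N\<close> by (simp add: restr_def)
  qed
qed (simp add: restr_sub)

lemma acyc: "(x, y) \<in> r\<^sup>* \<Longrightarrow> (y, x) \<in> r\<^sup>* \<Longrightarrow> x = y"
proof (rule ccontr)
  assume "(x, y) \<in> r\<^sup>*" "(y, x) \<in> r\<^sup>*" "x \<noteq> y"
  then have "(x, y) \<in> r\<^sup>+" using rtranclD by metis
  then have "(x, x) \<in> r\<^sup>+" using \<open>(y, x) \<in> r\<^sup>*\<close> by (meson trancl_rtrancl_trancl)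
  moreover have "acyclic r" using wfr by (rule wf_acyclic)
  ultimately show False by (simp add: acyclic_def)
qed

lemma restr_char:
  assumes D: "D \<subseteq> N" and u: "u \<in> D" and par: "\<forall>t\<in>D. t \<noteq> u \<longrightarrow> (\<exists>s\<in>D. (t, s) \<in> r)"
    and down: "\<forall>q t. (q, t) \<in> r \<and> t \<in> D \<longrightarrow> q \<in> D"
  shows "D = restr N r u"
proof
  show "restr N r u \<subseteq> D"
  proof
    fix z assume "z \<in> restr N r u"
    then have "(z, u) \<in> r\<^sup>*" by (auto simp: restr_def)
    then show "z \<in> D"
      by (induction rule: converse_rtrancl_induct) (use u down in auto)
  qed
next
  have key: "\<forall>t\<in>D. (t, a) \<in> r ^^ n \<longrightarrow> (t, u) \<in> r\<^sup>*" for n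
  proof (induction n rule: less_induct)
    case (less n)
    show ?case
    proof (intro ballI impI)
      fix t assume t: "t \<in> D" "(t, a) \<in> r ^^ n"
      show "(t, u) \<in> r\<^sup>*"
      proof (cases "t = u")
        case True then show ?thesis by simp
      next
        case False
        then obtain s where s: "s \<in> D" "(t, s) \<in> r" using par t by blast
        then have "s \<in> N" using D by auto
        then obtain m where m: "(s, a) \<in> r ^^ m" using ex1_implies_ex[OF dist[rule_format]] by blast
        then have "(t, a) \<in> r ^^ Suc m" using s(2) by (meson relpow_Suc_I2)
        moreover have "t \<in> N" using t D by auto
        ultimately have u1: "\<exists>!n. (t, a) \<in> r ^^ n" "(t, a) \<in> r ^^ Suc m" using dist[rule_format] by auto
        then have "n = Suc m" using t(2) by (metis Ex1_def)
        then have "(s, u) \<in> r\<^sup>*" using less s m by auto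
        then show ?thesis using s(2) by (meson converse_rtrancl_into_rtrancl)
      qed
    qed
  qed
  show "D \<subseteq> restr N r u"
  proof
    fix t assume t: "t \<in> D"
    then have "t \<in> N" using D by auto
    then obtain n where "(t, a) \<in> r ^^ n" using ex1_implies_ex[OF dist[rule_format]] by blast
    then have "(t, u) \<in> r\<^sup>*" using key t by blast
    then show "t \<in> restr N r u" using \<open>t \<in> N\<close> by (simp add: restr_def)
  qed
qed

lemma restr_props:
  assumes "u \<in> N"
  shows "u \<in> restr N r u" "\<forall>t\<in>restr N r u. t \<noteq> u \<longrightarrow> (\<exists>s\<in>restr N r u. (t, s) \<in> r)"
    "\<forall>q t. (q, t) \<in> r \<and> t \<in> restr N r u \<longrightarrow> q \<in> restr N r u"
proof -
  show "u \<in> restr N r u" using assms by (simp add: restr_self)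
  show "\<forall>q t. (q, t) \<in> r \<and> t \<in> restr N r u \<longrightarrow> q \<in> restr N r u"
    using restr_down[OF rN] by blast
  show "\<forall>t\<in>restr N r u. t \<noteq> u \<longrightarrow> (\<exists>s\<in>restr N r u. (t, s) \<in> r)"
  proof (intro ballI impI)
    fix t assume t: "t \<in> restr N r u" "t \<noteq> u"
    have 1: "(t, u) \<in> r\<^sup>*" using t(1) by (auto simp: restr_def)
    have "(t, u) \<in> r\<^sup>+" using 1 t(2) by (meson rtranclD)
    then obtain s where s: "(t, s) \<in> r" "(s, u) \<in> r\<^sup>*" using tranclD by metis
    have "s \<in> N" using rN s(1) by auto
    then show "\<exists>s\<in>restr N r u. (t, s) \<in> r" using s unfolding restr_def by blast
  qed
qed

lemma restr_child:
  assumes "t \<in> restr N r x" "t \<noteq> x"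
  shows "\<exists>u. (u, x) \<in> r \<and> t \<in> restr N r u"
proof -
  have 1: "(t, x) \<in> r\<^sup>*" "t \<in> N" using assms by (auto simp: restr_def)
  have "(t, x) \<in> r\<^sup>+" using 1(1) assms(2) by (meson rtranclD)
  then obtain u where "(t, u) \<in> r\<^sup>*" "(u, x) \<in> r" using tranclD2 by metis
  then show ?thesis using 1(2) unfolding restr_def by blast
qed

end

lemma down_rtrancl:
  assumes "(x, y) \<in> r\<^sup>*" "y \<in> A" "\<forall>q t. (q, t) \<in> r \<and> t \<in> A \<longrightarrow> q \<in> A"
  shows "x \<in> A"
  using assms by (induction rule: converse_rtrancl_induct) auto

lemma iso_fwd:
  assumes iso: "struct_iso h A r B s"
    and dA: "\<forall>q t. (q, t) \<in> r \<and> t \<in> A \<longrightarrow> q \<in> A"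
    and t': "t' \<in> A" and tt: "(t, t') \<in> r\<^sup>*"
  shows "(h t, h t') \<in> s\<^sup>*"
  using tt t'
proof (induction rule: converse_rtrancl_induct)
  case base then show ?case by simp
next
  case (step y z)
  have "z \<in> A" using down_rtrancl[OF step(2) step(4) dA] .
  then have "y \<in> A" using dA step(1) by blast
  then have "(h y, h z) \<in> s" using iso \<open>z \<in> A\<close> step(1) by (auto simp: struct_iso_def)
  then show ?case using step by (meson converse_rtrancl_into_rtrancl)
qed

lemma iso_inv:
  assumes "struct_iso h A r B s" shows "struct_iso (inv_into A h) B s A r"
proof -
  have bij: "bij_betw h A B" and pres: "\<forall>x\<in>A. \<forall>y\<in>A. (x, y) \<in> r \<longleftrightarrow> (h x, h y) \<in> s"
    using assms by (auto simp: struct_iso_def)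
  have b2: "bij_betw (inv_into A h) B A" using bij by (simp add: bij_betw_inv_into)
  have "\<forall>x\<in>B. \<forall>y\<in>B. (x, y) \<in> s \<longleftrightarrow> (inv_into A h x, inv_into A h y) \<in> r"
  proof (intro ballI)
    fix x y assume "x \<in> B" "y \<in> B"
    then have "inv_into A h x \<in> A" "inv_into A h y \<in> A" "h (inv_into A h x) = x" "h (inv_into A h y) = y"
      using bij by (auto simp: bij_betw_def inv_into_into f_inv_into_f)
    then show "(x, y) \<in> s \<longleftrightarrow> (inv_into A h x, inv_into A h y) \<in> r" using pres by (metis (no_types))
  qed
  then show ?thesis using b2 by (simp add: struct_iso_def)
qed

lemma iso_comp:
  assumes "struct_iso g A r B s" "struct_iso h B s D q" shows "struct_iso (h \<circ> g) A r D q"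
proof -
  have "bij_betw (h \<circ> g) A D" using assms unfolding struct_iso_def by (meson bij_betw_trans)
  moreover have "\<forall>x\<in>A. \<forall>y\<in>A. (x, y) \<in> r \<longleftrightarrow> ((h \<circ> g) x, (h \<circ> g) y) \<in> q"
  proof (intro ballI)
    fix x y assume xy: "x \<in> A" "y \<in> A"
    then have "g x \<in> B" "g y \<in> B" using assms(1) by (auto simp: struct_iso_def bij_betw_def)
    then show "(x, y) \<in> r \<longleftrightarrow> ((h \<circ> g) x, (h \<circ> g) y) \<in> q" using xy assms unfolding struct_iso_def by simp
  qed
  ultimately show ?thesis by (simp add: struct_iso_def)
qed

lemma iso_rtrancl:
  assumes iso: "struct_iso h A r B s"
    and dA: "\<forall>q t. (q, t) \<in> r \<and> t \<in> A \<longrightarrow> q \<in> A"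
    and dB: "\<forall>q t. (q, t) \<in> s \<and> t \<in> B \<longrightarrow> q \<in> B"
    and t: "t \<in> A" "t' \<in> A"
  shows "(t, t') \<in> r\<^sup>* \<longleftrightarrow> (h t, h t') \<in> s\<^sup>*"
proof
  show "(t, t') \<in> r\<^sup>* \<Longrightarrow> (h t, h t') \<in> s\<^sup>*" using iso_fwd[OF iso dA t(2)] .
  assume "(h t, h t') \<in> s\<^sup>*"
  have bij: "bij_betw h A B" using iso by (simp add: struct_iso_def)
  have "h t' \<in> B" using bij t by (auto simp: bij_betw_def)
  from iso_fwd[OF iso_inv[OF iso] dB this \<open>(h t, h t') \<in> s\<^sup>*\<close>]
  moreover have "inv_into A h (h t) = t" "inv_into A h (h t') = t'"
    using bij t by (auto simp: bij_betw_def inv_into_f_f)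
  ultimately show "(t, t') \<in> r\<^sup>*" by simp
qed



definition ISOH :: "'a set \<Rightarrow> ('a \<Rightarrow> 'a \<Rightarrow> bool) \<Rightarrow> 'a set \<Rightarrow> 'a set \<Rightarrow> 'a set \<Rightarrow> 'a set \<Rightarrow> 'a set \<Rightarrow> 'a \<Rightarrow> 'a \<Rightarrow> bool" where
 "ISOH M E N1 R1 N2 R2 A u w \<longleftrightarrow>
 (\<forall>q\<in>M. q \<in> A \<longrightarrow> (\<exists>a\<in>M. \<exists>b\<in>M. opair M E a b q)) \<and>
 (\<forall>a\<in>M. \<forall>b\<in>M. \<forall>b'\<in>M. relH M E A a b \<and> relH M E A a b' \<longrightarrow> b = b') \<and>
 (\<forall>a\<in>M. \<forall>a'\<in>M. \<forall>b\<in>M. relH M E A a b \<and> relH M E A a' b \<longrightarrow> a = a') \<and>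
 (\<exists>b\<in>M. relH M E A u b) \<and>
 (\<forall>a\<in>M. \<forall>b\<in>M. relH M E A a b \<longrightarrow> a \<in> N1 \<and> b \<in> N2) \<and>
 (\<forall>a\<in>M. \<forall>b\<in>M. relH M E A a b \<and> a \<noteq> u \<longrightarrow> (\<exists>a'\<in>M. \<exists>b'\<in>M. relH M E A a' b' \<and> relH M E R1 a a')) \<and>
 (\<forall>a\<in>M. \<forall>b\<in>M. \<forall>t\<in>M. relH M E A a b \<and> relH M E R1 t a \<longrightarrow> (\<exists>b'\<in>M. relH M E A t b')) \<and>
 (\<exists>a\<in>M. relH M E A a w) \<and>
 (\<forall>a\<in>M. \<forall>b\<in>M. relH M E A a b \<and> b \<noteq> w \<longrightarrow> (\<exists>a'\<in>M. \<exists>b'\<in>M. relH M E A a' b' \<and> relH M E R2 b b')) \<and>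
 (\<forall>a\<in>M. \<forall>b\<in>M. \<forall>t\<in>M. relH M E A a b \<and> relH M E R2 t b \<longrightarrow> (\<exists>a'\<in>M. relH M E A a' t)) \<and>
 (\<forall>a\<in>M. \<forall>b\<in>M. \<forall>a'\<in>M. \<forall>b'\<in>M. relH M E A a b \<and> relH M E A a' b' \<longrightarrow> (relH M E R1 a a' \<longleftrightarrow> relH M E R2 b b'))"

definition ISOF :: form where
 "ISOF =
  Conj (SAll 10 (Imp (CMem 10 4) (SEx 5 (SEx 6 (opairF 5 6 10)))))
 (Conj (SAll 5 (SAll 6 (SAll 8 (Imp (Conj (relF 4 5 6) (relF 4 5 8)) (SEq 6 8)))))
 (Conj (SAll 5 (SAll 7 (SAll 6 (Imp (Conj (relF 4 5 6) (relF 4 7 6)) (SEq 5 7)))))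
 (Conj (SEx 6 (relF 4 3 6))
 (Conj (SAll 5 (SAll 6 (Imp (relF 4 5 6) (Conj (CMem 5 0) (CMem 6 2)))))
 (Conj (SAll 5 (SAll 6 (Imp (Conj (relF 4 5 6) (Neg (SEq 5 3))) (SEx 7 (SEx 8 (Conj (relF 4 7 8) (relF 1 5 7)))))))
 (Conj (SAll 5 (SAll 6 (SAll 9 (Imp (Conj (relF 4 5 6) (relF 1 9 5)) (SEx 8 (relF 4 9 8))))))
 (Conj (SEx 5 (relF 4 5 4))
 (Conj (SAll 5 (SAll 6 (Imp (Conj (relF 4 5 6) (Neg (SEq 6 4))) (SEx 7 (SEx 8 (Conj (relF 4 7 8) (relF 3 6 8)))))))
 (Conj (SAll 5 (SAll 6 (SAll 9 (Imp (Conj (relF 4 5 6) (relF 3 9 6)) (SEx 7 (relF 4 7 9))))))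
       (SAll 5 (SAll 6 (SAll 7 (SAll 8 (Imp (Conj (relF 4 5 6) (relF 4 7 8)) (Iff (relF 1 5 7) (relF 3 6 8)))))))
 )))))))))"

lemma sat_ISOF:
  assumes "s 3 \<in> M" "s 4 \<in> M"
  shows "sat M E C s S ISOF = ISOH M E (S 0) (S 1) (S 2) (S 3) (S 4) (s 3) (s 4)"
  using assms unfolding ISOF_def ISOH_def by simp

definition GF :: form where
 "GF = Or (opairF 1 2 0) (SEx 3 (Conj (relF 1 3 1) (CEx 4 (Conj (CMem 0 4) (SEx 4 (Conj (relF 3 4 2) ISOF))))))"

lemma sat_GF:
  assumes "s 0 \<in> M" "s 1 \<in> M" "s 2 \<in> M"
  shows "sat M E C s S GF = (opair M E (s 1) (s 2) (s 0) \<or> (\<exists>u\<in>M. relH M E (S 1) u (s 1) \<and>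
     (\<exists>A\<in>C. s 0 \<in> A \<and> (\<exists>w\<in>M. relH M E (S 3) w (s 2) \<and> ISOH M E (S 0) (S 1) (S 2) (S 3) A u w))))"
  using assms unfolding GF_def by (simp add: sat_ISOF)

definition KF :: form where
 "KF = SEx 5 (SEx 6 (SEx 7 (Conj (opairF 6 7 0) (Conj (relF 0 5 6) (relF 1 5 7)))))"

lemma sat_KF:
  assumes "s 0 \<in> M"
  shows "sat M E C s S KF = (\<exists>a\<in>M. \<exists>b\<in>M. \<exists>c\<in>M. opair M E b c (s 0) \<and> relH M E (S 0) a b \<and> relH M E (S 1) a c)"
  using assms unfolding KF_def by simp



context mk begin

lemma compr: "range s \<subseteq> M \<Longrightarrow> range S \<subseteq> C \<Longrightarrow> {z \<in> M. sat M E C (s(n := z)) S \<phi>} \<in> C"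
  using mks unfolding mk_star_def by blast

lemma relH_rel: "R \<subseteq> M \<Longrightarrow> (t, t') \<in> rel_of M E R \<longleftrightarrow> t \<in> M \<and> t' \<in> M \<and> relH M E R t t'"
  unfolding rel_of_def relH_def by blast

lemma codes_rel:
  assumes "codes M E A g D" "D \<subseteq> M" "g ` D \<subseteq> M" "a \<in> M" "b \<in> M"
  shows "relH M E A a b \<longleftrightarrow> (a \<in> D \<and> b = g a)"
proof
  assume "relH M E A a b"
  then obtain q where q: "q \<in> M" "q \<in> A" "opair M E a b q" by (auto simp: relH_def)
  then obtain t where t: "t \<in> D" "opair M E t (g t) q" using assms(1) by (auto simp: codes_def)
  show "a \<in> D \<and> b = g a" using opair_inj[OF q(3) t(2)] t(1) by simp
next
  assume ab: "a \<in> D \<and> b = g a"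
  obtain q where q: "opair M E a b q" using opair_ex assms(4,5) by blast
  then have "q \<in> M" by (simp add: opair_def)
  then have "q \<in> A" using assms(1) ab q by (auto simp: codes_def)
  then show "relH M E A a b" using q \<open>q \<in> M\<close> by (auto simp: relH_def)
qed

lemma rel_sub:
  assumes "\<forall>p\<in>R. \<exists>x\<in>N. \<exists>y\<in>N. opair M E x y p"
  shows "rel_of M E R \<subseteq> N \<times> N"
proof
  fix z assume "z \<in> rel_of M E R"
  then obtain t t' p where z: "z = (t, t')" "p \<in> R" "opair M E t t' p" by (auto simp: rel_of_def)
  then obtain x y where "x \<in> N" "y \<in> N" "opair M E x y p" using assms by blast
  then show "z \<in> N \<times> N" using opair_inj[OF z(3)] z(1) by auto
qed

lemma cp_facts:
  assumes "coding_pair M E C N R" "wf (rel_of M E R)"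
  shows "\<exists>a. tree N (rel_of M E R) a \<and>
    (\<forall>x\<in>N. \<forall>y\<in>N. \<forall>z\<in>N. y \<noteq> z \<and> (y, x) \<in> rel_of M E R \<and> (z, x) \<in> rel_of M E R \<longrightarrow>
            \<not> class_iso M E C (restr N (rel_of M E R) y) (rel_of M E R) (restr N (rel_of M E R) z) (rel_of M E R))"
proof -
  have 1: "\<forall>p\<in>R. \<exists>x\<in>N. \<exists>y\<in>N. opair M E x y p" using assms(1) by (simp add: coding_pair_def Let_def)
  obtain a where a: "a \<in> N" "\<forall>z\<in>N. \<exists>!n. (z, a) \<in> rel_of M E R ^^ n"
     "\<forall>x\<in>N. \<forall>y\<in>N. \<forall>z\<in>N. y \<noteq> z \<and> (y, x) \<in> rel_of M E R \<and> (z, x) \<in> rel_of M E R \<longrightarrow>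
            \<not> class_iso M E C (restr N (rel_of M E R) y) (rel_of M E R) (restr N (rel_of M E R) z) (rel_of M E R)"
    using assms(1) unfolding coding_pair_def Let_def by blast
  have "tree N (rel_of M E R) a" using rel_sub[OF 1] a(1,2) assms(2) by (simp add: tree_def)
  then show ?thesis using a(3) by blast
qed

end


locale setp = mk M E C + t1: tree N1 "rel_of M E R1" a1 + t2: tree N2 "rel_of M E R2" a2
  for M :: "'a set" and E C N1 R1 a1 N2 R2 a2 +
  assumes N1C: "N1 \<in> C" and R1C: "R1 \<in> C" and N2C: "N2 \<in> C" and R2C: "R2 \<in> C"
  and rig2: "\<forall>x\<in>N2. \<forall>y\<in>N2. \<forall>z\<in>N2. y \<noteq> z \<and> (y, x) \<in> rel_of M E R2 \<and> (z, x) \<in> rel_of M E R2 \<longrightarrow>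
            \<not> class_iso M E C (restr N2 (rel_of M E R2) y) (rel_of M E R2) (restr N2 (rel_of M E R2) z) (rel_of M E R2)"
begin

abbreviation "r1 \<equiv> rel_of M E R1"
abbreviation "r2 \<equiv> rel_of M E R2"

lemma N1M: "N1 \<subseteq> M" using CM N1C .
lemma N2M: "N2 \<subseteq> M" using CM N2C .

lemma rr1: "t \<in> M \<Longrightarrow> t' \<in> M \<Longrightarrow> relH M E R1 t t' \<longleftrightarrow> (t, t') \<in> r1"
  by (simp add: relH_rel[OF CM[OF R1C]])
lemma rr2: "t \<in> M \<Longrightarrow> t' \<in> M \<Longrightarrow> relH M E R2 t t' \<longleftrightarrow> (t, t') \<in> r2"
  by (simp add: relH_rel[OF CM[OF R2C]])

lemma iso_to_ISOH:
  assumes A: "A \<in> C" and u: "u \<in> N1" and w: "w \<in> N2"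
    and iso: "struct_iso g (restr N1 r1 u) r1 (restr N2 r2 w) r2" and cd: "codes M E A g (restr N1 r1 u)"
  shows "ISOH M E N1 R1 N2 R2 A u w"
proof -
  let ?D1 = "restr N1 r1 u" and ?D2 = "restr N2 r2 w"
  have D1M: "?D1 \<subseteq> M" using N1M restr_sub[of N1 r1 u] by (rule order_trans[rotated])
  have D2M: "?D2 \<subseteq> M" using N2M restr_sub[of N2 r2 w] by (rule order_trans[rotated])
  have bij: "bij_betw g ?D1 ?D2" and pres: "\<forall>x\<in>?D1. \<forall>y\<in>?D1. (x, y) \<in> r1 \<longleftrightarrow> (g x, g y) \<in> r2"
    using iso by (auto simp: struct_iso_def)
  have img: "g ` ?D1 = ?D2" using bij by (simp add: bij_betw_def)
  have inj: "inj_on g ?D1" using bij by (simp add: bij_betw_def)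
  have gM: "g ` ?D1 \<subseteq> M" using img D2M by simp
  have cr: "\<And>a b. a \<in> M \<Longrightarrow> b \<in> M \<Longrightarrow> relH M E A a b \<longleftrightarrow> (a \<in> ?D1 \<and> b = g a)"
    using codes_rel[OF cd D1M gM] by blast
  have p1: "u \<in> ?D1" "\<forall>t\<in>?D1. t \<noteq> u \<longrightarrow> (\<exists>s\<in>?D1. (t, s) \<in> r1)"
    "\<forall>q t. (q, t) \<in> r1 \<and> t \<in> ?D1 \<longrightarrow> q \<in> ?D1" using t1.restr_props[OF u] by blast+
  have p2: "w \<in> ?D2" "\<forall>t\<in>?D2. t \<noteq> w \<longrightarrow> (\<exists>s\<in>?D2. (t, s) \<in> r2)"
    "\<forall>q t. (q, t) \<in> r2 \<and> t \<in> ?D2 \<longrightarrow> q \<in> ?D2" using t2.restr_props[OF w] by blast+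
  have gD: "\<And>a. a \<in> ?D1 \<Longrightarrow> g a \<in> ?D2" using img by blast
  have aM: "\<And>a. a \<in> ?D1 \<Longrightarrow> a \<in> M" using D1M by blast
  have bM: "\<And>a. a \<in> ?D2 \<Longrightarrow> a \<in> M" using D2M by blast
  have c1: "\<forall>q\<in>M. q \<in> A \<longrightarrow> (\<exists>a\<in>M. \<exists>b\<in>M. opair M E a b q)"
  proof (intro ballI impI)
    fix q assume "q \<in> M" "q \<in> A"
    then obtain t where "t \<in> ?D1" "opair M E t (g t) q" using cd by (auto simp: codes_def)
    then show "\<exists>a\<in>M. \<exists>b\<in>M. opair M E a b q" using aM gD bM by blast
  qed
  have c2: "\<forall>a\<in>M. \<forall>b\<in>M. \<forall>b'\<in>M. relH M E A a b \<and> relH M E A a b' \<longrightarrow> b = b'" using cr by auto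
  have c3: "\<forall>a\<in>M. \<forall>a'\<in>M. \<forall>b\<in>M. relH M E A a b \<and> relH M E A a' b \<longrightarrow> a = a'"
    using cr inj by (auto simp: inj_on_def)
  have c4: "\<exists>b\<in>M. relH M E A u b" using cr p1(1) gD aM bM by blast
  have c5: "\<forall>a\<in>M. \<forall>b\<in>M. relH M E A a b \<longrightarrow> a \<in> N1 \<and> b \<in> N2"
    using cr gD restr_sub[of N1 r1 u] restr_sub[of N2 r2 w] by blast
  have c6: "\<forall>a\<in>M. \<forall>b\<in>M. relH M E A a b \<and> a \<noteq> u \<longrightarrow> (\<exists>a'\<in>M. \<exists>b'\<in>M. relH M E A a' b' \<and> relH M E R1 a a')"
  proof (intro ballI impI)
    fix a b assume ab: "a \<in> M" "b \<in> M" "relH M E A a b \<and> a \<noteq> u"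
    then have "a \<in> ?D1" using cr by blast
    then obtain s where "s \<in> ?D1" "(a, s) \<in> r1" using p1(2) ab by blast
    then show "\<exists>a'\<in>M. \<exists>b'\<in>M. relH M E A a' b' \<and> relH M E R1 a a'"
      using cr rr1 gD aM bM ab(1) by blast
  qed
  have c7: "\<forall>a\<in>M. \<forall>b\<in>M. \<forall>t\<in>M. relH M E A a b \<and> relH M E R1 t a \<longrightarrow> (\<exists>b'\<in>M. relH M E A t b')"
  proof (intro ballI impI)
    fix a b t assume ab: "a \<in> M" "b \<in> M" "t \<in> M" "relH M E A a b \<and> relH M E R1 t a"
    then have "a \<in> ?D1" "(t, a) \<in> r1" using cr rr1 by blast+
    then have "t \<in> ?D1" using p1(3) by blast
    then show "\<exists>b'\<in>M. relH M E A t b'" using cr gD bM ab(3) by blast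
  qed
  have c8: "\<exists>a\<in>M. relH M E A a w"
  proof -
    obtain a where "a \<in> ?D1" "g a = w" using p2(1) img by force
    then show ?thesis using cr aM bM p2(1) by metis
  qed
  have c9: "\<forall>a\<in>M. \<forall>b\<in>M. relH M E A a b \<and> b \<noteq> w \<longrightarrow> (\<exists>a'\<in>M. \<exists>b'\<in>M. relH M E A a' b' \<and> relH M E R2 b b')"
  proof (intro ballI impI)
    fix a b assume ab: "a \<in> M" "b \<in> M" "relH M E A a b \<and> b \<noteq> w"
    then have "a \<in> ?D1" "b = g a" using cr by blast+
    then have "b \<in> ?D2" using gD by blast
    then obtain s where s: "s \<in> ?D2" "(b, s) \<in> r2" using p2(2) ab by blast
    then obtain a' where a': "a' \<in> ?D1" "s = g a'" using img by force
    show "\<exists>a'\<in>M. \<exists>b'\<in>M. relH M E A a' b' \<and> relH M E R2 b b'"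
      using a' s cr rr2 aM bM ab(2) by metis
  qed
  have c10: "\<forall>a\<in>M. \<forall>b\<in>M. \<forall>t\<in>M. relH M E A a b \<and> relH M E R2 t b \<longrightarrow> (\<exists>a'\<in>M. relH M E A a' t)"
  proof (intro ballI impI)
    fix a b t assume ab: "a \<in> M" "b \<in> M" "t \<in> M" "relH M E A a b \<and> relH M E R2 t b"
    then have "a \<in> ?D1" "b = g a" "(t, b) \<in> r2" using cr rr2 by blast+
    then have "t \<in> ?D2" using p2(3) gD by blast
    then obtain a' where a': "a' \<in> ?D1" "t = g a'" using img by force
    then show "\<exists>a'\<in>M. relH M E A a' t" using cr aM ab(3) by metis
  qed
  have c11: "\<forall>a\<in>M. \<forall>b\<in>M. \<forall>a'\<in>M. \<forall>b'\<in>M. relH M E A a b \<and> relH M E A a' b' \<longrightarrow> (relH M E R1 a a' \<longleftrightarrow> relH M E R2 b b')"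
  proof (intro ballI impI)
    fix a b a' b' assume ab: "a \<in> M" "b \<in> M" "a' \<in> M" "b' \<in> M" "relH M E A a b \<and> relH M E A a' b'"
    then have "a \<in> ?D1" "b = g a" "a' \<in> ?D1" "b' = g a'" using cr by blast+
    then show "relH M E R1 a a' \<longleftrightarrow> relH M E R2 b b'" using pres rr1 rr2 ab(1-4) by simp
  qed
  show ?thesis unfolding ISOH_def using c1 c2 c3 c4 c5 c6 c7 c8 c9 c10 c11 by blast
qed


lemma ISOH_to_iso:
  assumes A: "A \<in> C" and u: "u \<in> N1" and w: "w \<in> N2" and cs: "ISOH M E N1 R1 N2 R2 A u w"
  shows "\<exists>g. struct_iso g (restr N1 r1 u) r1 (restr N2 r2 w) r2 \<and> codes M E A g (restr N1 r1 u)"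
proof -
  have c1: "\<forall>q\<in>M. q \<in> A \<longrightarrow> (\<exists>a\<in>M. \<exists>b\<in>M. opair M E a b q)" using cs[unfolded ISOH_def, THEN conjunct1] .
  have c2: "\<forall>a\<in>M. \<forall>b\<in>M. \<forall>b'\<in>M. relH M E A a b \<and> relH M E A a b' \<longrightarrow> b = b'" using cs[unfolded ISOH_def, THEN conjunct2, THEN conjunct1] .
  have c3: "\<forall>a\<in>M. \<forall>a'\<in>M. \<forall>b\<in>M. relH M E A a b \<and> relH M E A a' b \<longrightarrow> a = a'" using cs[unfolded ISOH_def, THEN conjunct2, THEN conjunct2, THEN conjunct1] .
  have c4: "\<exists>b\<in>M. relH M E A u b" using cs[unfolded ISOH_def, THEN conjunct2, THEN conjunct2, THEN conjunct2, THEN conjunct1] .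
  have c5: "\<forall>a\<in>M. \<forall>b\<in>M. relH M E A a b \<longrightarrow> a \<in> N1 \<and> b \<in> N2" using cs[unfolded ISOH_def, THEN conjunct2, THEN conjunct2, THEN conjunct2, THEN conjunct2, THEN conjunct1] .
  have c6: "\<forall>a\<in>M. \<forall>b\<in>M. relH M E A a b \<and> a \<noteq> u \<longrightarrow> (\<exists>a'\<in>M. \<exists>b'\<in>M. relH M E A a' b' \<and> relH M E R1 a a')" using cs[unfolded ISOH_def, THEN conjunct2, THEN conjunct2, THEN conjunct2, THEN conjunct2, THEN conjunct2, THEN conjunct1] .
  have c7: "\<forall>a\<in>M. \<forall>b\<in>M. \<forall>t\<in>M. relH M E A a b \<and> relH M E R1 t a \<longrightarrow> (\<exists>b'\<in>M. relH M E A t b')" using cs[unfolded ISOH_def, THEN conjunct2, THEN conjunct2, THEN conjunct2, THEN conjunct2, THEN conjunct2, THEN conjunct2, THEN conjunct1] .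
  have c8: "\<exists>a\<in>M. relH M E A a w" using cs[unfolded ISOH_def, THEN conjunct2, THEN conjunct2, THEN conjunct2, THEN conjunct2, THEN conjunct2, THEN conjunct2, THEN conjunct2, THEN conjunct1] .
  have c9: "\<forall>a\<in>M. \<forall>b\<in>M. relH M E A a b \<and> b \<noteq> w \<longrightarrow> (\<exists>a'\<in>M. \<exists>b'\<in>M. relH M E A a' b' \<and> relH M E R2 b b')" using cs[unfolded ISOH_def, THEN conjunct2, THEN conjunct2, THEN conjunct2, THEN conjunct2, THEN conjunct2, THEN conjunct2, THEN conjunct2, THEN conjunct2, THEN conjunct1] .
  have c10: "\<forall>a\<in>M. \<forall>b\<in>M. \<forall>t\<in>M. relH M E A a b \<and> relH M E R2 t b \<longrightarrow> (\<exists>a'\<in>M. relH M E A a' t)" using cs[unfolded ISOH_def, THEN conjunct2, THEN conjunct2, THEN conjunct2, THEN conjunct2, THEN conjunct2, THEN conjunct2, THEN conjunct2, THEN conjunct2, THEN conjunct2, THEN conjunct1] .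
  have c11: "\<forall>a\<in>M. \<forall>b\<in>M. \<forall>a'\<in>M. \<forall>b'\<in>M. relH M E A a b \<and> relH M E A a' b' \<longrightarrow> (relH M E R1 a a' \<longleftrightarrow> relH M E R2 b b')" using cs[unfolded ISOH_def, THEN conjunct2, THEN conjunct2, THEN conjunct2, THEN conjunct2, THEN conjunct2, THEN conjunct2, THEN conjunct2, THEN conjunct2, THEN conjunct2, THEN conjunct2] .
  define D1 where "D1 = {a \<in> M. \<exists>b\<in>M. relH M E A a b}"
  define D2 where "D2 = {b \<in> M. \<exists>a\<in>M. relH M E A a b}"
  define g where "g = (\<lambda>a. THE b. b \<in> M \<and> relH M E A a b)"
  have gp: "g a \<in> M \<and> relH M E A a (g a)" if aD: "a \<in> D1" for a
  proof -
    obtain b where b: "b \<in> M" "relH M E A a b" using aD unfolding D1_def by blast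
    have "a \<in> M" using aD unfolding D1_def by blast
    have "g a = b" unfolding g_def
    proof (rule the_equality)
      show "b \<in> M \<and> relH M E A a b" using b by blast
      fix b' assume "b' \<in> M \<and> relH M E A a b'"
      then show "b' = b" using c2[rule_format, OF \<open>a \<in> M\<close> b(1), of b'] b(2) by blast
    qed
    then show ?thesis using b by simp
  qed
  have cr: "relH M E A a b \<longleftrightarrow> a \<in> D1 \<and> b = g a" if ab0: "a \<in> M" "b \<in> M" for a b
  proof
    assume h: "relH M E A a b"
    then have "a \<in> D1" using ab0 unfolding D1_def by blast
    moreover have "g a \<in> M" "relH M E A a (g a)" using gp[OF \<open>a \<in> D1\<close>] by auto
    ultimately show "a \<in> D1 \<and> b = g a" using c2[rule_format, OF ab0(1) ab0(2) \<open>g a \<in> M\<close>] h by blast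
  next
    assume "a \<in> D1 \<and> b = g a" then show "relH M E A a b" using gp by auto
  qed
  have N1M': "\<And>x. x \<in> N1 \<Longrightarrow> x \<in> M" using N1M by blast
  have N2M': "\<And>x. x \<in> N2 \<Longrightarrow> x \<in> M" using N2M by blast
  have r1N: "\<And>x y. (x, y) \<in> r1 \<Longrightarrow> x \<in> N1 \<and> y \<in> N1" using t1.rN by blast
  have r2N: "\<And>x y. (x, y) \<in> r2 \<Longrightarrow> x \<in> N2 \<and> y \<in> N2" using t2.rN by blast
  have D1r: "D1 = restr N1 r1 u"
  proof (rule t1.restr_char)
    show "D1 \<subseteq> N1" using c5 unfolding D1_def by blast
    show "u \<in> D1" using c4 u N1M' unfolding D1_def by blast
    show "\<forall>t\<in>D1. t \<noteq> u \<longrightarrow> (\<exists>s\<in>D1. (t, s) \<in> r1)"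
    proof (intro ballI impI)
      fix t assume t: "t \<in> D1" "t \<noteq> u"
      then obtain b where "t \<in> M" "b \<in> M" "relH M E A t b" unfolding D1_def by blast
      then obtain a' b' where ab: "a' \<in> M" "b' \<in> M" "relH M E A a' b'" "relH M E R1 t a'" using c6 t(2) by blast
      then have "a' \<in> D1" "(t, a') \<in> r1" using rr1 \<open>t \<in> M\<close> unfolding D1_def by blast+
      then show "\<exists>s\<in>D1. (t, s) \<in> r1" by blast
    qed
    show "\<forall>q t. (q, t) \<in> r1 \<and> t \<in> D1 \<longrightarrow> q \<in> D1"
    proof (intro allI impI)
      fix q t assume qt: "(q, t) \<in> r1 \<and> t \<in> D1"
      then have qM: "q \<in> M" "t \<in> M" using r1N N1M' by blast+
      then have "relH M E R1 q t" using rr1 qt by blast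
      moreover obtain b where "b \<in> M" "relH M E A t b" using qt unfolding D1_def by blast
      ultimately obtain b' where "b' \<in> M" "relH M E A q b'" using c7 qM by blast
      then show "q \<in> D1" using qM unfolding D1_def by blast
    qed
  qed
  have D2r: "D2 = restr N2 r2 w"
  proof (rule t2.restr_char)
    show "D2 \<subseteq> N2" using c5 unfolding D2_def by blast
    show "w \<in> D2" using c8 w N2M' unfolding D2_def by blast
    show "\<forall>t\<in>D2. t \<noteq> w \<longrightarrow> (\<exists>s\<in>D2. (t, s) \<in> r2)"
    proof (intro ballI impI)
      fix t assume t: "t \<in> D2" "t \<noteq> w"
      then obtain a where "t \<in> M" "a \<in> M" "relH M E A a t" unfolding D2_def by blast
      then obtain a' b' where ab: "a' \<in> M" "b' \<in> M" "relH M E A a' b'" "relH M E R2 t b'" using c9 t(2) by blast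
      then have "b' \<in> D2" "(t, b') \<in> r2" using rr2 \<open>t \<in> M\<close> unfolding D2_def by blast+
      then show "\<exists>s\<in>D2. (t, s) \<in> r2" by blast
    qed
    show "\<forall>q t. (q, t) \<in> r2 \<and> t \<in> D2 \<longrightarrow> q \<in> D2"
    proof (intro allI impI)
      fix q t assume qt: "(q, t) \<in> r2 \<and> t \<in> D2"
      then have qM: "q \<in> M" "t \<in> M" using r2N N2M' by blast+
      then have "relH M E R2 q t" using rr2 qt by blast
      moreover obtain a where "a \<in> M" "relH M E A a t" using qt unfolding D2_def by blast
      ultimately obtain a' where "a' \<in> M" "relH M E A a' q" using c10 qM by blast
      then show "q \<in> D2" using qM unfolding D2_def by blast
    qed
  qed
  have D1M: "\<And>a. a \<in> D1 \<Longrightarrow> a \<in> M" unfolding D1_def by blast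
  have img: "g ` D1 = D2"
  proof
    show "g ` D1 \<subseteq> D2" using gp D1M unfolding D2_def by blast
    show "D2 \<subseteq> g ` D1"
    proof
      fix b assume "b \<in> D2"
      then obtain a where a: "a \<in> M" "b \<in> M" "relH M E A a b" unfolding D2_def by blast
      then have "a \<in> D1" "b = g a" using cr by blast+
      then show "b \<in> g ` D1" by blast
    qed
  qed
  have inj: "inj_on g D1"
  proof (rule inj_onI)
    fix x y assume xy: "x \<in> D1" "y \<in> D1" "g x = g y"
    then have "relH M E A x (g x)" "relH M E A y (g x)" "x \<in> M" "y \<in> M" "g x \<in> M" using gp D1M by metis+
    then show "x = y" using c3 by blast
  qed
  have pres: "\<forall>x\<in>D1. \<forall>y\<in>D1. (x, y) \<in> r1 \<longleftrightarrow> (g x, g y) \<in> r2"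
  proof (intro ballI)
    fix x y assume xy: "x \<in> D1" "y \<in> D1"
    then have h: "relH M E A x (g x)" "relH M E A y (g y)" "x \<in> M" "y \<in> M" "g x \<in> M" "g y \<in> M" using gp D1M by metis+
    have "relH M E R1 x y \<longleftrightarrow> relH M E R2 (g x) (g y)" using c11 h by blast
    then show "(x, y) \<in> r1 \<longleftrightarrow> (g x, g y) \<in> r2" using rr1 rr2 h by simp
  qed
  have iso: "struct_iso g D1 r1 D2 r2" using img inj pres by (simp add: struct_iso_def bij_betw_def)
  have cd: "codes M E A g D1"
    unfolding codes_def
  proof (intro conjI ballI)
    show "A \<subseteq> M" using CM A .
    fix p assume pM: "p \<in> M"
    show "p \<in> A \<longleftrightarrow> (\<exists>x\<in>D1. opair M E x (g x) p)"
    proof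
      assume "p \<in> A"
      then obtain a b where ab: "a \<in> M" "b \<in> M" "opair M E a b p" using c1 pM by blast
      then have "relH M E A a b" using pM \<open>p \<in> A\<close> by (auto simp: relH_def)
      then have "a \<in> D1" "b = g a" using cr ab by blast+
      then show "\<exists>x\<in>D1. opair M E x (g x) p" using ab by blast
    next
      assume "\<exists>x\<in>D1. opair M E x (g x) p"
      then obtain x where x: "x \<in> D1" "opair M E x (g x) p" by blast
      then have "relH M E A x (g x)" using gp by blast
      then obtain q where "q \<in> M" "q \<in> A" "opair M E x (g x) q" by (auto simp: relH_def)
      then show "p \<in> A" using opair_uniq x(2) by metis
    qed
  qed
  show ?thesis using iso cd D1r D2r by blast
qed

end


context setp begin

abbreviation I where "I h x y \<equiv> struct_iso h (restr N1 r1 x) r1 (restr N2 r2 y) r2"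

lemma down1: "\<forall>q t. (q, t) \<in> r1 \<and> t \<in> restr N1 r1 x \<longrightarrow> q \<in> restr N1 r1 x"
  using restr_down[OF t1.rN] by blast
lemma down2: "\<forall>q t. (q, t) \<in> r2 \<and> t \<in> restr N2 r2 x \<longrightarrow> q \<in> restr N2 r2 x"
  using restr_down[OF t2.rN] by blast

lemma iso_root:
  assumes x: "x \<in> N1" and y: "y \<in> N2" and iso: "I h x y"
  shows "h x = y"
proof -
  have bij: "bij_betw h (restr N1 r1 x) (restr N2 r2 y)" using iso by (simp add: struct_iso_def)
  have xx: "x \<in> restr N1 r1 x" using x by (rule restr_self)
  have yy: "y \<in> restr N2 r2 y" using y by (rule restr_self)
  obtain t0 where t0: "t0 \<in> restr N1 r1 x" "h t0 = y" using bij yy unfolding bij_betw_def by force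
  have "(t0, x) \<in> r1\<^sup>*" using t0(1) by (simp add: restr_def)
  then have 1: "(y, h x) \<in> r2\<^sup>*" using iso_rtrancl[OF iso down1 down2 t0(1) xx] t0(2) by simp
  have "h x \<in> restr N2 r2 y" using bij xx unfolding bij_betw_def by blast
  then have 2: "(h x, y) \<in> r2\<^sup>*" by (simp add: restr_def)
  show ?thesis using t2.acyc[OF 2 1] .
qed

lemma iso_child:
  assumes x: "x \<in> N1" and y: "y \<in> N2" and iso: "I h x y" and ux: "(u, x) \<in> r1"
  shows "u \<in> N1 \<and> h u \<in> N2 \<and> (h u, y) \<in> r2 \<and> I h u (h u)"
proof -
  have bij: "bij_betw h (restr N1 r1 x) (restr N2 r2 y)" and
    pres: "\<forall>a\<in>restr N1 r1 x. \<forall>b\<in>restr N1 r1 x. (a, b) \<in> r1 \<longleftrightarrow> (h a, h b) \<in> r2"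
    using iso by (auto simp: struct_iso_def)
  have img: "h ` restr N1 r1 x = restr N2 r2 y" using bij by (simp add: bij_betw_def)
  have inj: "inj_on h (restr N1 r1 x)" using bij by (simp add: bij_betw_def)
  have xx: "x \<in> restr N1 r1 x" using x by (rule restr_self)
  have uN: "u \<in> N1" using ux t1.rN by blast
  have uu: "u \<in> restr N1 r1 x" using down1 ux xx by blast
  have huy: "(h u, y) \<in> r2" using pres uu xx ux iso_root[OF x y iso] by metis
  have hu2: "h u \<in> restr N2 r2 y" using img uu by blast
  have huN: "h u \<in> N2" using hu2 by (simp add: restr_def)
  have sub: "restr N1 r1 u \<subseteq> restr N1 r1 x" using ux by (intro restr_mono) auto
  have sub2: "restr N2 r2 (h u) \<subseteq> restr N2 r2 y" using huy by (intro restr_mono) auto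
  have img2: "h ` restr N1 r1 u = restr N2 r2 (h u)"
  proof
    show "h ` restr N1 r1 u \<subseteq> restr N2 r2 (h u)"
    proof
      fix b assume "b \<in> h ` restr N1 r1 u"
      then obtain t where t: "t \<in> restr N1 r1 u" "b = h t" by blast
      have tx: "t \<in> restr N1 r1 x" using t(1) sub by blast
      have "(t, u) \<in> r1\<^sup>*" using t(1) by (simp add: restr_def)
      then have "(h t, h u) \<in> r2\<^sup>*" using iso_rtrancl[OF iso down1 down2 tx uu] by simp
      moreover have "h t \<in> N2" using img tx by (auto simp: restr_def)
      ultimately show "b \<in> restr N2 r2 (h u)" using t(2) by (simp add: restr_def)
    qed
    show "restr N2 r2 (h u) \<subseteq> h ` restr N1 r1 u"
    proof
      fix b assume b: "b \<in> restr N2 r2 (h u)"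
      then have "b \<in> restr N2 r2 y" using sub2 by blast
      then obtain t where t: "t \<in> restr N1 r1 x" "b = h t" using img by force
      have "(h t, h u) \<in> r2\<^sup>*" using b t(2) by (simp add: restr_def)
      then have "(t, u) \<in> r1\<^sup>*" using iso_rtrancl[OF iso down1 down2 t(1) uu] by simp
      then have "t \<in> restr N1 r1 u" using t(1) by (simp add: restr_def)
      then show "b \<in> h ` restr N1 r1 u" using t(2) by blast
    qed
  qed
  have "I h u (h u)"
    unfolding struct_iso_def bij_betw_def
    using img2 inj_on_subset[OF inj sub] pres sub by blast
  then show ?thesis using uN huN huy by blast
qed

lemma comp_class:
  assumes A: "A \<in> C" and A': "A' \<in> C" and u: "u \<in> N1"
    and g: "I g u w" and cg: "codes M E A g (restr N1 r1 u)"
    and g': "I g' u w'" and cg': "codes M E A' g' (restr N1 r1 u)"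
  shows "class_iso M E C (restr N2 r2 w) r2 (restr N2 r2 w') r2"
proof -
  let ?D1 = "restr N1 r1 u" and ?D2 = "restr N2 r2 w" and ?D3 = "restr N2 r2 w'"
  define k where "k = g' \<circ> inv_into ?D1 g"
  have kiso: "struct_iso k ?D2 r2 ?D3 r2" unfolding k_def by (rule iso_comp[OF iso_inv[OF g] g'])
  have uM: "u \<in> M" using u N1M by blast
  define s :: "nat \<Rightarrow> 'a" where "s = (\<lambda>_. u)"
  define S :: "nat \<Rightarrow> 'a set" where "S = (\<lambda>_. A)(1 := A')"
  have sM: "range s \<subseteq> M" using uM s_def by auto
  have SC: "range S \<subseteq> C" using A A' S_def by auto
  define K where "K = {z \<in> M. sat M E C (s(0 := z)) S KF}"
  have KC: "K \<in> C" unfolding K_def by (rule compr[OF sM SC])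
  have D1M: "?D1 \<subseteq> M" using N1M restr_sub[of N1 r1 u] by (rule order_trans[rotated])
  have b1: "bij_betw g ?D1 ?D2" using g by (simp add: struct_iso_def)
  have b2: "bij_betw g' ?D1 ?D3" using g' by (simp add: struct_iso_def)
  have gM: "g ` ?D1 \<subseteq> M" using b1 N2M restr_sub[of N2 r2 w] unfolding bij_betw_def by blast
  have gM': "g' ` ?D1 \<subseteq> M" using b2 N2M restr_sub[of N2 r2 w'] unfolding bij_betw_def by blast
  have cr: "\<And>a b. a \<in> M \<Longrightarrow> b \<in> M \<Longrightarrow> relH M E A a b \<longleftrightarrow> (a \<in> ?D1 \<and> b = g a)"
    using codes_rel[OF cg D1M gM] by blast
  have cr': "\<And>a b. a \<in> M \<Longrightarrow> b \<in> M \<Longrightarrow> relH M E A' a b \<longleftrightarrow> (a \<in> ?D1 \<and> b = g' a)"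
    using codes_rel[OF cg' D1M gM'] by blast
  have memK: "p \<in> K \<longleftrightarrow> (\<exists>b\<in>?D2. opair M E b (k b) p)" if pM: "p \<in> M" for p
  proof -
    have "p \<in> K \<longleftrightarrow> (\<exists>a\<in>M. \<exists>b\<in>M. \<exists>c\<in>M. opair M E b c p \<and> relH M E A a b \<and> relH M E A' a c)"
      using pM by (simp add: K_def sat_KF S_def)
    also have "\<dots> \<longleftrightarrow> (\<exists>a\<in>?D1. opair M E (g a) (g' a) p)"
    proof
      assume "\<exists>a\<in>M. \<exists>b\<in>M. \<exists>c\<in>M. opair M E b c p \<and> relH M E A a b \<and> relH M E A' a c"
      then obtain a b c where abc: "a \<in> M" "b \<in> M" "c \<in> M" "opair M E b c p" "relH M E A a b" "relH M E A' a c" by blast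
      then have "a \<in> ?D1" "b = g a" "c = g' a" using cr cr' by blast+
      then show "\<exists>a\<in>?D1. opair M E (g a) (g' a) p" using abc(4) by blast
    next
      assume "\<exists>a\<in>?D1. opair M E (g a) (g' a) p"
      then obtain a where a: "a \<in> ?D1" "opair M E (g a) (g' a) p" by blast
      have "a \<in> M" "g a \<in> M" "g' a \<in> M" using a(1) D1M gM gM' by blast+
      moreover have "relH M E A a (g a)" "relH M E A' a (g' a)" using cr cr' a(1) calculation by blast+
      ultimately show "\<exists>a\<in>M. \<exists>b\<in>M. \<exists>c\<in>M. opair M E b c p \<and> relH M E A a b \<and> relH M E A' a c"
        using a(2) by blast
    qed
    also have "\<dots> \<longleftrightarrow> (\<exists>b\<in>?D2. opair M E b (k b) p)"
    proof
      assume "\<exists>a\<in>?D1. opair M E (g a) (g' a) p"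
      then obtain a where a: "a \<in> ?D1" "opair M E (g a) (g' a) p" by blast
      have "k (g a) = g' a" using a(1) b1 by (simp add: k_def bij_betw_def inv_into_f_f)
      moreover have "g a \<in> ?D2" using a(1) b1 by (auto simp: bij_betw_def)
      ultimately show "\<exists>b\<in>?D2. opair M E b (k b) p" using a(2) by metis
    next
      assume "\<exists>b\<in>?D2. opair M E b (k b) p"
      then obtain b where b: "b \<in> ?D2" "opair M E b (k b) p" by blast
      let ?a = "inv_into ?D1 g b"
      have "?a \<in> ?D1" "g ?a = b" using b(1) b1 by (auto simp: bij_betw_def inv_into_into f_inv_into_f)
      moreover have "k b = g' ?a" by (simp add: k_def)
      ultimately show "\<exists>a\<in>?D1. opair M E (g a) (g' a) p" using b(2) by metis
    qed
    finally show ?thesis .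
  qed
  have "codes M E K k ?D2"
    unfolding codes_def using memK K_def by blast
  then show ?thesis unfolding class_iso_def using KC kiso by blast
qed

end


context setp begin

lemma main:
  "x \<in> N1 \<longrightarrow> (\<forall>y\<in>N2. \<forall>h h'. I h x y \<and> I h' x y \<longrightarrow> (\<forall>t\<in>restr N1 r1 x. h t = h' t)) \<and>
     (\<forall>y\<in>N2. \<forall>h. I h x y \<longrightarrow> (\<exists>G\<in>C. codes M E G h (restr N1 r1 x)))"
proof (induction x rule: wf_induct[OF t1.wfr])
  case (1 x)
  show ?case
  proof
    assume x: "x \<in> N1"
    have IHU: "\<And>u y h h' t. (u, x) \<in> r1 \<Longrightarrow> y \<in> N2 \<Longrightarrow> I h u y \<Longrightarrow> I h' u y \<Longrightarrow> t \<in> restr N1 r1 u \<Longrightarrow> h t = h' t"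
    proof -
      fix u y h h' t assume a: "(u, x) \<in> r1" "y \<in> N2" "I h u y" "I h' u y" "t \<in> restr N1 r1 u"
      have "u \<in> N1" using a(1) t1.rN by blast
      then show "h t = h' t" using 1 a by blast
    qed
    have IHQ: "\<And>u y h. (u, x) \<in> r1 \<Longrightarrow> y \<in> N2 \<Longrightarrow> I h u y \<Longrightarrow> \<exists>G\<in>C. codes M E G h (restr N1 r1 u)"
    proof -
      fix u y h assume a: "(u, x) \<in> r1" "y \<in> N2" "I h u y"
      have "u \<in> N1" using a(1) t1.rN by blast
      then show "\<exists>G\<in>C. codes M E G h (restr N1 r1 u)" using 1 a by blast
    qed
    have same: "w = h u \<and> (\<forall>t\<in>restr N1 r1 u. g t = h t)"
      if a: "y \<in> N2" "I h x y" "(u, x) \<in> r1" "A \<in> C" "w \<in> N2" "(w, y) \<in> r2" "I g u w"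
        "codes M E A g (restr N1 r1 u)" for y h u A g w
    proof -
      have ch: "u \<in> N1 \<and> h u \<in> N2 \<and> (h u, y) \<in> r2 \<and> I h u (h u)" using iso_child[OF x a(1) a(2) a(3)] .
      obtain Au where Au: "Au \<in> C" "codes M E Au h (restr N1 r1 u)" using IHQ[OF a(3)] ch by blast
      have ci: "class_iso M E C (restr N2 r2 w) r2 (restr N2 r2 (h u)) r2"
        using comp_class[OF a(4) Au(1) _ a(7) a(8) _ Au(2)] ch by blast
      have "w = h u"
      proof (rule ccontr)
        assume "w \<noteq> h u"
        then show False using rig2 a(1) a(5) a(6) ch ci by blast
      qed
      moreover have "\<forall>t\<in>restr N1 r1 u. g t = h t"
        using IHU[OF a(3)] ch a(7) calculation by blast
      ultimately show ?thesis by blast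
    qed
    show "(\<forall>y\<in>N2. \<forall>h h'. I h x y \<and> I h' x y \<longrightarrow> (\<forall>t\<in>restr N1 r1 x. h t = h' t)) \<and>
     (\<forall>y\<in>N2. \<forall>h. I h x y \<longrightarrow> (\<exists>G\<in>C. codes M E G h (restr N1 r1 x)))"
    proof (intro conjI ballI allI impI)
      fix y h h' t assume y: "y \<in> N2" and hh: "I h x y \<and> I h' x y" and t: "t \<in> restr N1 r1 x"
      show "h t = h' t"
      proof (cases "t = x")
        case True
        have "h x = y" "h' x = y" using iso_root[OF x y] hh by blast+
        then show ?thesis using True by simp
      next
        case False
        then obtain u where u: "(u, x) \<in> r1" "t \<in> restr N1 r1 u" using t1.restr_child[OF t] by blast
        have ch: "u \<in> N1 \<and> h' u \<in> N2 \<and> (h' u, y) \<in> r2 \<and> I h' u (h' u)" using iso_child[OF x y _ u(1)] hh by blast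
        obtain A' where A': "A' \<in> C" "codes M E A' h' (restr N1 r1 u)" using IHQ[OF u(1)] ch by blast
        have "\<forall>t\<in>restr N1 r1 u. h' t = h t" using same[OF y _ u(1) A'(1) _ _ _ A'(2)] hh ch by blast
        then show ?thesis using u(2) by simp
      qed
    next
      fix y h assume y: "y \<in> N2" and h: "I h x y"
      have xM: "x \<in> M" using x N1M by blast
      have yM: "y \<in> M" using y N2M by blast
      define s :: "nat \<Rightarrow> 'a" where "s = (\<lambda>_. x)(2 := y)"
      define S :: "nat \<Rightarrow> 'a set" where "S = (\<lambda>_. N1)(1 := R1, 2 := N2, 3 := R2)"
      have sM: "range s \<subseteq> M" using xM yM s_def by auto
      have SC: "range S \<subseteq> C" using N1C R1C N2C R2C S_def by auto
      define G where "G = {z \<in> M. sat M E C (s(0 := z)) S GF}"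
      have GC: "G \<in> C" unfolding G_def by (rule compr[OF sM SC])
      have hx: "h x = y" using iso_root[OF x y h] .
      have memG: "p \<in> G \<longleftrightarrow> (opair M E x y p \<or> (\<exists>u\<in>M. relH M E R1 u x \<and>
          (\<exists>A\<in>C. p \<in> A \<and> (\<exists>w\<in>M. relH M E R2 w y \<and> ISOH M E N1 R1 N2 R2 A u w))))" if pM: "p \<in> M" for p
        using pM xM yM by (simp add: G_def sat_GF s_def S_def)
      have "codes M E G h (restr N1 r1 x)"
        unfolding codes_def
      proof (intro conjI ballI)
        show "G \<subseteq> M" using G_def by blast
        fix p assume pM: "p \<in> M"
        show "p \<in> G \<longleftrightarrow> (\<exists>t\<in>restr N1 r1 x. opair M E t (h t) p)"
        proof
          assume "p \<in> G"
          then have "opair M E x y p \<or> (\<exists>u\<in>M. relH M E R1 u x \<and>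
             (\<exists>A\<in>C. p \<in> A \<and> (\<exists>w\<in>M. relH M E R2 w y \<and> ISOH M E N1 R1 N2 R2 A u w)))"
            using memG pM by blast
          then show "\<exists>t\<in>restr N1 r1 x. opair M E t (h t) p"
          proof
            assume "opair M E x y p"
            then show ?thesis using hx restr_self[OF x] by metis
          next
            assume "\<exists>u\<in>M. relH M E R1 u x \<and>
             (\<exists>A\<in>C. p \<in> A \<and> (\<exists>w\<in>M. relH M E R2 w y \<and> ISOH M E N1 R1 N2 R2 A u w))"
            then obtain u A w where uAw: "u \<in> M" "relH M E R1 u x" "A \<in> C" "p \<in> A" "w \<in> M"
              "relH M E R2 w y" "ISOH M E N1 R1 N2 R2 A u w" by blast
            have ux: "(u, x) \<in> r1" using rr1 uAw(1,2) xM by blast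
            have wy: "(w, y) \<in> r2" using rr2 uAw(5,6) yM by blast
            have uN: "u \<in> N1" using ux t1.rN by blast
            have wN: "w \<in> N2" using wy t2.rN by blast
            obtain g where g: "I g u w" "codes M E A g (restr N1 r1 u)"
              using ISOH_to_iso[OF uAw(3) uN wN uAw(7)] by blast
            have gh: "\<forall>t\<in>restr N1 r1 u. g t = h t" using same[OF y h ux uAw(3) wN wy g] by blast
            obtain t where t: "t \<in> restr N1 r1 u" "opair M E t (g t) p"
              using g(2) uAw(4) pM unfolding codes_def by blast
            have "restr N1 r1 u \<subseteq> restr N1 r1 x" using ux by (intro restr_mono) auto
            then have "t \<in> restr N1 r1 x" using t(1) by blast
            moreover have "opair M E t (h t) p" using t gh by simp
            ultimately show ?thesis by blast
          qed
        next
          assume "\<exists>t\<in>restr N1 r1 x. opair M E t (h t) p"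
          then obtain t where t: "t \<in> restr N1 r1 x" "opair M E t (h t) p" by blast
          show "p \<in> G"
          proof (cases "t = x")
            case True
            then have "opair M E x y p" using t hx by simp
            then show ?thesis using memG pM by blast
          next
            case False
            then obtain u where u: "(u, x) \<in> r1" "t \<in> restr N1 r1 u" using t1.restr_child[OF t(1)] by blast
            have ch: "u \<in> N1 \<and> h u \<in> N2 \<and> (h u, y) \<in> r2 \<and> I h u (h u)" using iso_child[OF x y h u(1)] .
            obtain A where A: "A \<in> C" "codes M E A h (restr N1 r1 u)" using IHQ[OF u(1)] ch by blast
            have "ISOH M E N1 R1 N2 R2 A u (h u)" using iso_to_ISOH[OF A(1)] ch A(2) by blast
            moreover have "p \<in> A" using A(2) t(2) u(2) pM unfolding codes_def by blast
            moreover have "u \<in> M" "h u \<in> M" using ch N1M N2M by blast+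
            moreover have "relH M E R1 u x" using rr1 u(1) xM calculation(3) by blast
            moreover have "relH M E R2 (h u) y" using rr2 ch yM calculation(4) by blast
            ultimately show ?thesis using memG pM A(1) by blast
          qed
        qed
      qed
      then show "\<exists>G\<in>C. codes M E G h (restr N1 r1 x)" using GC by blast
    qed
  qed
qed

end

theorem lemma9:
  fixes M :: "'a set" and E :: "'a \<Rightarrow> 'a \<Rightarrow> bool" and C :: "'a set set"
    and N1 N2 R1 R2 :: "'a set"
  assumes "transitive_model M E"
    and "mk_star M E C"
    and "beta_model M E C"
    and "N1 \<in> C" and "N2 \<in> C" and "R1 \<in> C" and "R2 \<in> C"
    and "wf (rel_of M E R1)" and "wf (rel_of M E R2)"
    and "coding_pair M E C N1 R1" and "coding_pair M E C N2 R2"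
    and "\<exists>f. struct_iso f N1 (rel_of M E R1) N2 (rel_of M E R2)"
  shows "class_iso M E C N1 (rel_of M E R1) N2 (rel_of M E R2)"
proof -
  interpret mk M E C using assms(2) by (simp add: mk_def)
  obtain a1 where a1: "tree N1 (rel_of M E R1) a1" using cp_facts[OF assms(10) assms(8)] by blast
  obtain a2 where a2: "tree N2 (rel_of M E R2) a2"
    "\<forall>x\<in>N2. \<forall>y\<in>N2. \<forall>z\<in>N2. y \<noteq> z \<and> (y, x) \<in> rel_of M E R2 \<and> (z, x) \<in> rel_of M E R2 \<longrightarrow>
            \<not> class_iso M E C (restr N2 (rel_of M E R2) y) (rel_of M E R2) (restr N2 (rel_of M E R2) z) (rel_of M E R2)"
    using cp_facts[OF assms(11) assms(9)] by blast
  interpret setp M E C N1 R1 a1 N2 R2 a2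
    by (rule setp.intro) (use assms a1 a2 in \<open>simp_all add: mk_def setp_axioms_def\<close>)
  obtain f where f: "struct_iso f N1 r1 N2 r2" using assms(12) by blast
  have "I f a1 a2" using f t1.restr_top t2.restr_top by simp
  then obtain G where "G \<in> C" "codes M E G f (restr N1 r1 a1)"
    using main t1.aN t2.aN by blast
  then show ?thesis unfolding class_iso_def using f t1.restr_top by auto
qed



end
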